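(* Let $f\in L^\infty(\mathbb{T})$, let $N$ and $k$ be positive integers, and define $g$ on $\mathbb{T}$ by $g(e^{i\theta})=f(e^{ik\theta})$. Then $\|A_{f,N}\|=\|A_{g,kN}\|$.
   Context: $\mathbb{T}$ is the unit circle with normalized Lebesgue measure, $L^2=L^2(\mathbb{T})$, and $\hat f(n)=\frac{1}{2\pi}\int_0^{2\pi} f(e^{i\theta})e^{-in\theta}\,d\theta$. $\mathcal{P}_M$ is the subspace of $L^2$ of complex polynomials of degree at most $M$. For $f\in L^\infty$, $A_{f,M}$ is the compression to $\mathcal{P}_M$ of the operator of multiplication by $f$ on $L^2$; equivalently its matrix with respect to the orthonormal basis $1,z,\dots,z^M$ is the Toeplitz matrix $(\hat f(j-l))_{j,l=0}^M$. $\|\cdot\|$ is the operator norm on $\mathcal{P}_M$. *)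

theory Defs
  imports "HOL-Analysis.Analysis"
begin

text \<open>Functions on the unit circle are modelled as complex-valued functions on
  complex numbers, of which only the values on the unit circle (points cis t)
  matter.  Membership in L-infinity of the circle: measurable in the angle
  variable on [0, 2 pi] and essentially bounded there (normalized Lebesgue
  measure and Lebesgue measure on [0, 2 pi] have the same null sets).\<close>

definition Linf_circle :: "(complex \<Rightarrow> complex) \<Rightarrow> bool" where
  "Linf_circle f \<longleftrightarrow>
     set_borel_measurable lborel {0..2*pi} (\<lambda>t. f (cis t)) \<and>
     (\<exists>C. AE t in lborel. t \<in> {0..2*pi} \<longrightarrow> norm (f (cis t)) \<le> C)"

definition fourier_coeff :: "(complex \<Rightarrow> complex) \<Rightarrow> int \<Rightarrow> complex" where
  "fourier_coeff f n =
     complex_of_real (1 / (2*pi)) *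
       (LINT t:{0..2*pi}|lborel. f (cis t) * cis (- (of_int n * t)))"

text \<open>Operator norm of the compression A_{f,M} to the polynomials of degree at
  most M, i.e. the operator norm (w.r.t. the Euclidean norm on C^(M+1)) of the
  Toeplitz matrix (fourier_coeff f (j - l)) for j, l = 0..M.\<close>

definition toeplitz_norm :: "(complex \<Rightarrow> complex) \<Rightarrow> nat \<Rightarrow> real" where
  "toeplitz_norm f M =
     Sup {sqrt (\<Sum>j\<le>M. (cmod (\<Sum>l\<le>M. fourier_coeff f (int j - int l) * x l))\<^sup>2)
          | x :: nat \<Rightarrow> complex. (\<Sum>l\<le>M. (cmod (x l))\<^sup>2) \<le> 1}"

end

theory Submission
  imports Defs
begin


definition Qf :: "(int \<Rightarrow> complex) \<Rightarrow> nat \<Rightarrow> (nat \<Rightarrow> complex) \<Rightarrow> real" where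
  "Qf c M x = (\<Sum>j\<le>M. (cmod (\<Sum>l\<le>M. c (int j - int l) * x l))\<^sup>2)"
definition nrm :: "nat \<Rightarrow> (nat \<Rightarrow> complex) \<Rightarrow> real" where
  "nrm M x = (\<Sum>l\<le>M. (cmod (x l))\<^sup>2)"
definition tn :: "(int \<Rightarrow> complex) \<Rightarrow> nat \<Rightarrow> real" where
  "tn c M = Sup {sqrt (Qf c M x) | x. nrm M x \<le> 1}"

lemma toeplitz_norm_tn: "toeplitz_norm f M = tn (fourier_coeff f) M"
  unfolding toeplitz_norm_def tn_def Qf_def nrm_def by simp

lemma tn_bdd: "bdd_above {sqrt (Qf c M x) | x. nrm M x \<le> 1}"
proof (rule bdd_aboveI)
  fix v assume "v \<in> {sqrt (Qf c M x) | x. nrm M x \<le> 1}"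
  then obtain x where v: "v = sqrt (Qf c M x)" and n: "nrm M x \<le> 1" by auto
  have xl: "cmod (x l) \<le> 1" if "l \<le> M" for l
  proof -
    have "(cmod (x l))\<^sup>2 \<le> nrm M x" unfolding nrm_def
      by (rule member_le_sum) (use that in auto)
    then have "(cmod (x l))\<^sup>2 \<le> 1\<^sup>2" using n by simp
    then show ?thesis by (rule power2_le_imp_le) simp
  qed
  have "Qf c M x \<le> (\<Sum>j\<le>M. (\<Sum>l\<le>M. cmod (c (int j - int l)))\<^sup>2)"
    unfolding Qf_def
  proof (rule sum_mono)
    fix j assume "j \<in> {..M}"
    have "cmod (\<Sum>l\<le>M. c (int j - int l) * x l) \<le> (\<Sum>l\<le>M. cmod (c (int j - int l) * x l))"
      by (rule norm_sum)
    also have "\<dots> \<le> (\<Sum>l\<le>M. cmod (c (int j - int l)))"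
      by (rule sum_mono) (auto simp: norm_mult intro!: mult_left_le[OF xl])
    finally show "(cmod (\<Sum>l\<le>M. c (int j - int l) * x l))\<^sup>2 \<le> (\<Sum>l\<le>M. cmod (c (int j - int l)))\<^sup>2"
      by (rule power_mono) simp
  qed
  then show "v \<le> sqrt (\<Sum>j\<le>M. (\<Sum>l\<le>M. cmod (c (int j - int l)))\<^sup>2)"
    unfolding v by simp
qed

lemma tn_upper: "nrm M x \<le> 1 \<Longrightarrow> sqrt (Qf c M x) \<le> tn c M"
  unfolding tn_def by (rule cSup_upper[OF _ tn_bdd]) auto

lemma Qf_nonneg: "Qf c M x \<ge> 0" unfolding Qf_def by (auto intro: sum_nonneg)

lemma tn_nonneg: "tn c M \<ge> 0"
proof -
  have "nrm M (\<lambda>_. 0) \<le> 1" by (simp add: nrm_def)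
  from tn_upper[OF this, of c] show ?thesis using Qf_nonneg[of c M "\<lambda>_. 0"] by (smt (verit) real_sqrt_ge_zero)
qed

lemma tn_hom: "Qf c M x \<le> (tn c M)\<^sup>2 * nrm M x"
proof (cases "nrm M x = 0")
  case True
  then have "\<forall>l\<in>{..M}. (cmod (x l))\<^sup>2 = 0" unfolding nrm_def
    by (subst sum_nonneg_eq_0_iff[symmetric]) auto
  then have "Qf c M x = 0" unfolding Qf_def by simp
  then show ?thesis using True by simp
next
  case False
  have nn: "nrm M x \<ge> 0" unfolding nrm_def by (auto intro: sum_nonneg)
  define t where "t = sqrt (nrm M x)"
  have t: "t > 0" using nn False unfolding t_def by simp
  have t2: "t\<^sup>2 = nrm M x" unfolding t_def using nn by simp
  define y where "y l = x l / of_real t" for l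
  have "nrm M y = nrm M x / t\<^sup>2" unfolding nrm_def y_def
    by (simp add: norm_divide power_divide sum_divide_distrib)
  then have ny: "nrm M y = 1" using t2 False by simp
  have "Qf c M y = Qf c M x / t\<^sup>2" unfolding Qf_def y_def
    by (simp add: sum_divide_distrib[symmetric] norm_divide power_divide times_divide_eq_right)
  moreover have "sqrt (Qf c M y) \<le> tn c M" using ny by (intro tn_upper) simp
  then have "Qf c M y \<le> (tn c M)\<^sup>2"
    using Qf_nonneg by (metis real_le_rsqrt real_sqrt_le_iff sqrt_le_D)
  ultimately have "Qf c M x / t\<^sup>2 \<le> (tn c M)\<^sup>2" by simp
  then have "Qf c M x \<le> (tn c M)\<^sup>2 * t\<^sup>2" using t by (simp add: divide_le_eq)
  then show ?thesis using t2 by simp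
qed

lemma reidx:
  assumes k: "k > (0::nat)"
  shows "(\<Sum>l\<le>k*N. G l) = (\<Sum>b\<le>N. \<Sum>s<k. if k*b+s \<le> k*N then G (k*b+s) else (0::'a::comm_monoid_add))"
proof -
  define P where "P = {..N} \<times> {..<k}"
  define h where "h = (\<lambda>(b,s). k*b+s)"
  have inj: "inj_on h {p\<in>P. h p \<le> k*N}"
  proof (rule inj_onI)
    fix p q assume "p \<in> {p\<in>P. h p \<le> k*N}" "q \<in> {p\<in>P. h p \<le> k*N}" "h p = h q"
    then obtain b s b' s' where pq: "p = (b,s)" "q = (b',s')" "s < k" "s' < k" "k*b+s = k*b'+s'"
      unfolding P_def h_def by auto
    have "b = (k*b+s) div k" using pq(3) by simp
    also have "\<dots> = (k*b'+s') div k" using pq(5) by simp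
    also have "\<dots> = b'" using pq(4) by simp
    finally have "b = b'" .
    moreover have "s = s'" using pq(5) \<open>b = b'\<close> by simp
    ultimately show "p = q" using pq by simp
  qed
  have im: "h ` {p\<in>P. h p \<le> k*N} = {..k*N}"
  proof
    show "h ` {p\<in>P. h p \<le> k*N} \<subseteq> {..k*N}" by auto
    show "{..k*N} \<subseteq> h ` {p\<in>P. h p \<le> k*N}"
    proof
      fix l assume l: "l \<in> {..k*N}"
      have "l div k \<le> N" using div_le_mono[of l "k*N" k] l k by simp
      moreover have "l = h (l div k, l mod k)" unfolding h_def by simp
      ultimately show "l \<in> h ` {p\<in>P. h p \<le> k*N}" using l k unfolding P_def
        by (intro image_eqI[of _ _ "(l div k, l mod k)"]) auto
    qed
  qed
  have "(\<Sum>b\<le>N. \<Sum>s<k. if k*b+s \<le> k*N then G (k*b+s) else 0)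
       = (\<Sum>p\<in>P. if h p \<le> k*N then G (h p) else 0)"
    unfolding P_def h_def by (auto simp: sum.cartesian_product case_prod_beta intro!: sum.cong)
  also have "\<dots> = (\<Sum>p\<in>{p\<in>P. h p \<le> k*N}. G (h p))"
    by (rule sum.inter_filter[symmetric]) (simp add: P_def)
  also have "\<dots> = (\<Sum>l\<in>h ` {p\<in>P. h p \<le> k*N}. G l)"
    by (simp add: sum.reindex[OF inj])
  finally show ?thesis unfolding im by simp
qed

lemma dvd_res:
  assumes "s < k" "s' < k"
  shows "int k dvd (int (k*a+s) - int (k*b+s')) \<longleftrightarrow> s = s'"
proof
  assume "int k dvd (int (k*a+s) - int (k*b+s'))"
  moreover have "int (k*a+s) - int (k*b+s') = int k * (int a - int b) + (int s - int s')"
    by (simp add: algebra_simps)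
  ultimately have "int k dvd int k * (int a - int b) + (int s - int s')" by metis
  then have "int k dvd (int s - int s')" using dvd_add_right_iff[of "int k" "int k * (int a - int b)"] by simp
  then have "int s mod int k = int s' mod int k" by (simp add: mod_eq_dvd_iff)
  then show "s = s'" using assms by simp
qed simp

lemma dvd_res_div:
  "k > 0 \<Longrightarrow> (int (k*a+s) - int (k*b+s)) div int k = int a - int b"
proof -
  assume "k > 0"
  have "int (k*a+s) - int (k*b+s) = int k * (int a - int b)" by (simp add: algebra_simps)
  then show ?thesis using \<open>k > 0\<close> by simp
qed

lemma tn_scale:
  assumes k: "k > 0" and hd: "\<And>n. d n = (if int k dvd n then c (n div int k) else 0)"
  shows "tn c N = tn d (k*N)"
proof (rule antisym)
  have dkk: "d (int (k*a) - int (k*b)) = c (int a - int b)" for a b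
    using hd[of "int (k*a) - int (k*b)"] dvd_res_div[OF k, of a 0 b] dvd_res[of 0 k a b] k by simp
  show "tn c N \<le> tn d (k*N)"
    unfolding tn_def
  proof (rule cSup_mono[OF _ tn_bdd])
    show "{sqrt (Qf c N x) |x. nrm N x \<le> 1} \<noteq> {}"
      by (auto intro!: exI[of _ "\<lambda>_. 0"] simp: nrm_def)
    fix v assume "v \<in> {sqrt (Qf c N x) |x. nrm N x \<le> 1}"
    then obtain x where v: "v = sqrt (Qf c N x)" and nx: "nrm N x \<le> 1" by auto
    define y where "y l = (if k dvd l then x (l div k) else 0)" for l
    have inj: "inj_on (\<lambda>b. k*b) {..N}" using k by (auto intro: inj_onI)
    have mem: "l \<in> (\<lambda>b. k*b) ` {..N}" if "k dvd l" "l \<le> k*N" for l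
    proof -
      have "l div k \<le> N" using div_le_mono[of l "k*N" k] that k by simp
      then show ?thesis using that by (intro image_eqI[of _ _ "l div k"]) auto
    qed
    have ysum: "(\<Sum>l\<le>k*N. G l * y l) = (\<Sum>b\<le>N. G (k*b) * x b)" for G :: "nat \<Rightarrow> complex"
    proof -
      have "(\<Sum>l\<le>k*N. G l * y l) = (\<Sum>l\<in>(\<lambda>b. k*b) ` {..N}. G l * y l)"
        by (rule sum.mono_neutral_right) (auto simp: y_def mem)
      also have "\<dots> = (\<Sum>b\<le>N. G (k*b) * x b)"
        using k by (subst sum.reindex[OF inj]) (simp add: y_def)
      finally show ?thesis .
    qed
    have "nrm (k*N) y = (\<Sum>l\<in>(\<lambda>b. k*b) ` {..N}. (cmod (y l))\<^sup>2)"
      unfolding nrm_def by (rule sum.mono_neutral_right) (auto simp: y_def mem)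
    also have "\<dots> = nrm N x"
      unfolding nrm_def using k by (subst sum.reindex[OF inj]) (simp add: y_def)
    finally have ny: "nrm (k*N) y \<le> 1" using nx by simp
    have "Qf c N x = (\<Sum>a\<le>N. (cmod (\<Sum>l\<le>k*N. d (int (k*a) - int l) * y l))\<^sup>2)"
      unfolding Qf_def ysum dkk ..
    also have "\<dots> = (\<Sum>j\<in>(\<lambda>b. k*b) ` {..N}. (cmod (\<Sum>l\<le>k*N. d (int j - int l) * y l))\<^sup>2)"
      by (subst sum.reindex[OF inj]) simp
    also have "\<dots> \<le> Qf d (k*N) y"
      unfolding Qf_def by (rule sum_mono2) auto
    finally show "\<exists>a\<in>{sqrt (Qf d (k*N) x) |x. nrm (k*N) x \<le> 1}. v \<le> a"
      using ny v by auto
  qed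
next
  let ?S = "tn c N"
  show "tn d (k*N) \<le> tn c N"
    unfolding tn_def[of d]
  proof (rule cSup_least)
    show "{sqrt (Qf d (k*N) x) |x. nrm (k*N) x \<le> 1} \<noteq> {}"
      by (auto intro!: exI[of _ "\<lambda>_. 0"] simp: nrm_def)
    fix v assume "v \<in> {sqrt (Qf d (k*N) x) |x. nrm (k*N) x \<le> 1}"
    then obtain y where v: "v = sqrt (Qf d (k*N) y)" and ny: "nrm (k*N) y \<le> 1" by auto
    define z where "z s b = (if k*b+s \<le> k*N then y (k*b+s) else 0)" for s b
    have row: "(\<Sum>l\<le>k*N. d (int (k*a+s) - int l) * y l) = (\<Sum>b\<le>N. c (int a - int b) * z s b)"
      if s: "s < k" for a s
    proof -
      have "(\<Sum>l\<le>k*N. d (int (k*a+s) - int l) * y l)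
          = (\<Sum>b\<le>N. \<Sum>s'<k. if k*b+s' \<le> k*N then d (int (k*a+s) - int (k*b+s')) * y (k*b+s') else 0)"
        by (rule reidx[OF k])
      also have "\<dots> = (\<Sum>b\<le>N. \<Sum>s'<k. if s' = s then c (int a - int b) * z s b else 0)"
      proof (intro sum.cong refl)
        fix b s' assume "s' \<in> {..<k}"
        then show "(if k*b+s' \<le> k*N then d (int (k*a+s) - int (k*b+s')) * y (k*b+s') else 0)
             = (if s' = s then c (int a - int b) * z s b else 0)"
          using hd[of "int (k*a+s) - int (k*b+s')"] dvd_res[OF s, of s' a b] dvd_res_div[OF k, of a s b]
          by (auto simp: z_def)
      qed
      also have "\<dots> = (\<Sum>b\<le>N. c (int a - int b) * z s b)"
        using s by simp
      finally show ?thesis .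
    qed
    have nrmz: "nrm (k*N) y = (\<Sum>s<k. nrm N (z s))"
    proof -
      have "nrm (k*N) y = (\<Sum>b\<le>N. \<Sum>s<k. if k*b+s \<le> k*N then (cmod (y (k*b+s)))\<^sup>2 else 0)"
        unfolding nrm_def by (rule reidx[OF k])
      also have "\<dots> = (\<Sum>b\<le>N. \<Sum>s<k. (cmod (z s b))\<^sup>2)"
        by (intro sum.cong refl) (simp add: z_def)
      also have "\<dots> = (\<Sum>s<k. nrm N (z s))"
        unfolding nrm_def by (rule sum.swap)
      finally show ?thesis .
    qed
    have "Qf d (k*N) y = (\<Sum>b\<le>N. \<Sum>s<k. if k*b+s \<le> k*N then
            (cmod (\<Sum>l\<le>k*N. d (int (k*b+s) - int l) * y l))\<^sup>2 else 0)"
      unfolding Qf_def by (rule reidx[OF k])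
    also have "\<dots> \<le> (\<Sum>b\<le>N. \<Sum>s<k. (cmod (\<Sum>l\<le>k*N. d (int (k*b+s) - int l) * y l))\<^sup>2)"
      by (intro sum_mono) auto
    also have "\<dots> = (\<Sum>b\<le>N. \<Sum>s<k. (cmod (\<Sum>l\<le>N. c (int b - int l) * z s l))\<^sup>2)"
      by (intro sum.cong refl) (metis row lessThan_iff)
    also have "\<dots> = (\<Sum>s<k. Qf c N (z s))"
      unfolding Qf_def by (rule sum.swap)
    also have "\<dots> \<le> (\<Sum>s<k. ?S\<^sup>2 * nrm N (z s))"
      by (intro sum_mono tn_hom)
    also have "\<dots> = ?S\<^sup>2 * nrm (k*N) y"
      unfolding nrmz by (simp add: sum_distrib_left)
    also have "\<dots> \<le> ?S\<^sup>2"
      using ny by (simp add: mult_left_le)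
    finally have "Qf d (k*N) y \<le> ?S\<^sup>2" .
    then show "v \<le> ?S" unfolding v using tn_nonneg[of c N] by (simp add: real_sqrt_le_iff real_le_lsqrt)
  qed
qed



lemma qp_per:
  fixes H :: "real \<Rightarrow> 'a::{real_normed_field,banach}"
  assumes per: "\<And>s. H (s + 2*pi) = w * H s"
  shows "H (s + 2*pi*real j) = w^j * H s"
proof (induction j)
  case (Suc j)
  have "H (s + 2*pi*real (Suc j)) = H ((s + 2*pi*real j) + 2*pi)" by (simp add: algebra_simps)
  also have "\<dots> = w * H (s + 2*pi*real j)" by (rule per)
  finally show ?case using Suc by simp
qed simp

lemma qp:
  fixes H :: "real \<Rightarrow> 'a::{real_normed_field,banach}"
  assumes I: "(H has_integral I) {0..2*pi}" and per: "\<And>s. H (s + 2*pi) = w * H s"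
  shows "(H has_integral ((\<Sum>i<j. w^i) * I)) {0..2*pi*real j}"
proof (induction j)
  case 0
  then show ?case using has_integral_refl(2)[of H 0] by simp
next
  case (Suc j)
  have I': "(H has_integral I) (cbox 0 (2*pi))" using I by simp
  from has_integral_affinity'[OF I', of 1 "-(2*pi*real j)"]
  have "((\<lambda>x. H (x - 2*pi*real j)) has_integral I) {2*pi*real j..2*pi + 2*pi*real j}"
    by simp
  from has_integral_mult_right[OF this, of "w^j"]
  have "((\<lambda>x. w^j * H (x - 2*pi*real j)) has_integral w^j * I) {2*pi*real j..2*pi*real (Suc j)}"
    by (simp add: algebra_simps)
  moreover have "w^j * H (x - 2*pi*real j) = H x" for x
    using qp_per[where H=H and w=w, OF per, of "x - 2*pi*real j" j] by simp
  ultimately have "(H has_integral w^j * I) {2*pi*real j..2*pi*real (Suc j)}" by simp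
  from has_integral_combine[OF _ _ Suc this]
  show ?case by (simp add: algebra_simps)
qed

lemma Linf_int:
  assumes "Linf_circle f"
  shows "set_integrable lborel {0..2*pi} (\<lambda>t. f (cis t) * cis (a * t))"
proof -
  have m: "(\<lambda>t. indicator {0..2*pi} t *\<^sub>R f (cis t)) \<in> borel_measurable lborel"
    and "\<exists>C. AE t in lborel. t \<in> {0..2*pi} \<longrightarrow> norm (f (cis t)) \<le> C"
    using assms unfolding Linf_circle_def set_borel_measurable_def by auto
  then obtain C where C: "AE t in lborel. t \<in> {0..2*pi} \<longrightarrow> norm (f (cis t)) \<le> C" by auto
  have [measurable]: "(\<lambda>t. cis (a * t)) \<in> borel_measurable borel"
    by (intro borel_measurable_continuous_onI continuous_intros)
  have eq: "(\<lambda>t. indicator {0..2*pi} t *\<^sub>R (f (cis t) * cis (a * t)))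
      = (\<lambda>t. (indicator {0..2*pi} t *\<^sub>R f (cis t)) * cis (a * t))"
    by (auto simp: indicator_def)
  show ?thesis unfolding set_integrable_def
  proof (rule integrableI_bounded_set[where A="{0..2*pi}" and B=C])
    show "(\<lambda>t. indicator {0..2*pi} t *\<^sub>R (f (cis t) * cis (a * t))) \<in> borel_measurable lborel"
      unfolding eq using m by measurable
    show "AE x in lborel. x \<in> {0..2*pi} \<longrightarrow> norm (indicator {0..2*pi} x *\<^sub>R (f (cis x) * cis (a * x))) \<le> C"
      using C by eventually_elim (auto simp: norm_mult)
    show "AE x in lborel. x \<notin> {0..2*pi} \<longrightarrow> indicator {0..2*pi} x *\<^sub>R (f (cis x) * cis (a * x)) = 0"
      by auto
  qed auto
qed

lemma red_props:
  fixes y :: real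
  shows "y - 2*pi* of_int \<lfloor>y/(2*pi)\<rfloor> \<in> {0..2*pi}"
    and "cis (y - 2*pi* of_int \<lfloor>y/(2*pi)\<rfloor>) = cis y"
proof -
  have a: "of_int \<lfloor>y/(2*pi)\<rfloor> \<le> y/(2*pi)" by (rule of_int_floor_le)
  have b: "y/(2*pi) < of_int \<lfloor>y/(2*pi)\<rfloor> + 1" by (rule real_of_int_floor_add_one_gt)
  have "2*pi* of_int \<lfloor>y/(2*pi)\<rfloor> \<le> 2*pi*(y/(2*pi))" using mult_left_mono[OF a, of "2*pi"] pi_gt_zero by simp
  moreover have "2*pi*(y/(2*pi)) < 2*pi*(of_int \<lfloor>y/(2*pi)\<rfloor> + 1)" using mult_strict_left_mono[OF b, of "2*pi"] pi_gt_zero by simp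
  moreover have "2*pi*(y/(2*pi)) = y" using pi_gt_zero by simp
  ultimately show "y - 2*pi* of_int \<lfloor>y/(2*pi)\<rfloor> \<in> {0..2*pi}" by (simp add: algebra_simps)
  have "cis (y - 2*pi* of_int \<lfloor>y/(2*pi)\<rfloor>) = cis y / cis (2*pi* of_int \<lfloor>y/(2*pi)\<rfloor>)"
    by (rule cis_divide[symmetric])
  also have "cis (2*pi* of_int \<lfloor>y/(2*pi)\<rfloor>) = 1" by (rule cis_multiple_2pi) simp
  finally show "cis (y - 2*pi* of_int \<lfloor>y/(2*pi)\<rfloor>) = cis y" by simp
qed

lemma fc_scale:
  assumes Linf: "Linf_circle f" and k: "k > 0"
  shows "fourier_coeff (\<lambda>z. f (z^k)) n = (if int k dvd n then fourier_coeff f (n div int k) else 0)"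
proof -
  define A where "A = {0..2*pi}"
  define a where "a = -(of_int n / real k)"
  define H where "H s = f (cis s) * cis (a * s)" for s
  define G where "G x = f (cis x ^ k) * cis (-(of_int n * x))" for x
  define w where "w = cis (-(2*pi* of_int n / real k))"
  have kpos: "real k > 0" using k by simp
  have Hint: "set_integrable lborel A H" unfolding A_def H_def by (rule Linf_int[OF Linf])
  define I where "I = integral A H"
  have HI: "(H has_integral I) {0..2*pi}" "(LINT t:A|lborel. H t) = I"
    using set_borel_integral_eq_integral[OF Hint] unfolding I_def A_def by auto
  have per: "H (s + 2*pi) = w * H s" for s
  proof -
    have "cis (s + 2*pi) = cis s" by (simp flip: cis_mult)
    moreover have "cis (a * (s + 2*pi)) = w * cis (a * s)"
      unfolding w_def a_def by (simp add: cis_mult algebra_simps)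
    ultimately show ?thesis unfolding H_def by simp
  qed
  from qp[OF HI(1) per, of k]
  have Hk: "(H has_integral ((\<Sum>i<k. w^i) * I)) (cbox 0 (2*pi*real k))" by simp
  have box: "cbox ((0 - 0) /\<^sub>R real k) ((2*pi*real k - 0) /\<^sub>R real k) = {0..2*pi}" using kpos by simp
  from has_integral_affinity'[OF Hk kpos, of 0]
  have "((\<lambda>x. H (real k * x)) has_integral ((\<Sum>i<k. w^i) * I) / real k) {0..2*pi}"
    unfolding box using kpos by (simp add: scaleR_conv_of_real divide_inverse mult.commute)
  moreover have "H (real k * x) = G x" for x
    unfolding H_def G_def a_def using kpos by (simp add: Complex.DeMoivre)
  ultimately have GI: "(G has_integral ((\<Sum>i<k. w^i) * I) / real k) A"
    unfolding A_def by simp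
  define Hn where "Hn s = cmod (f (cis s))" for s
  have "set_integrable lborel A (\<lambda>t. norm (f (cis t) * cis (0 * t)))"
    unfolding A_def by (rule set_integrable_norm[OF Linf_int[OF Linf]])
  then have "set_integrable lborel A Hn" unfolding Hn_def by (simp add: norm_mult)
  then have "(Hn has_integral integral A Hn) {0..2*pi}"
    using set_borel_integral_eq_integral(1) unfolding A_def by (blast intro: integrable_integral)
  moreover have pern: "Hn (s + 2*pi) = 1 * Hn s" for s unfolding Hn_def by (simp flip: cis_mult)
  ultimately have "(Hn has_integral ((\<Sum>i<k. 1^i) * integral A Hn)) {0..2*pi*real k}"
    by (rule qp)
  then have "(Hn has_integral ((\<Sum>i<k. 1^i) * integral A Hn)) (cbox 0 (2*pi*real k))"
    by simp
  from has_integral_affinity'[OF this kpos, of 0]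
  have "(\<lambda>x. Hn (real k * x)) integrable_on {0..2*pi}"
    unfolding box by (auto simp: integrable_on_def)
  moreover have "Hn (real k * x) = norm (G x)" for x
    unfolding Hn_def G_def by (simp add: Complex.DeMoivre norm_mult)
  ultimately have "(\<lambda>x. norm (G x)) integrable_on A" unfolding A_def by simp
  with GI have Gabs: "G absolutely_integrable_on A"
    by (auto simp: absolutely_integrable_on_def integrable_on_def)
  define R where "R y = y - 2*pi* of_int \<lfloor>y/(2*pi)\<rfloor>" for y :: real
  have Fm: "(\<lambda>t. indicator A t *\<^sub>R f (cis t)) \<in> borel_measurable lborel"
    using Linf unfolding Linf_circle_def set_borel_measurable_def A_def by auto
  have Rm: "(\<lambda>x. R (real k * x)) \<in> lborel \<rightarrow>\<^sub>M lborel"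
    unfolding measurable_lborel1 measurable_lborel2 R_def by measurable
  have [measurable]: "(\<lambda>t. cis (-(of_int n * t))) \<in> borel_measurable borel"
    by (intro borel_measurable_continuous_onI continuous_intros)
  have c1: "(\<lambda>x. (indicator A (R (real k * x)) *\<^sub>R f (cis (R (real k * x))))) \<in> borel_measurable lborel"
    using measurable_compose[OF Rm Fm] .
  have "(\<lambda>x. indicator A x *\<^sub>R G x) =
        (\<lambda>x. indicator A x *\<^sub>R ((indicator A (R (real k * x)) *\<^sub>R f (cis (R (real k * x)))) * cis (-(of_int n * x))))"
  proof
    fix x
    have "R (real k * x) \<in> A" "cis (R (real k * x)) = cis x ^ k"
      using red_props[of "real k * x"] unfolding R_def A_def by (auto simp: Complex.DeMoivre)
    then show "indicator A x *\<^sub>R G x =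
        indicator A x *\<^sub>R ((indicator A (R (real k * x)) *\<^sub>R f (cis (R (real k * x)))) * cis (-(of_int n * x)))"
      unfolding G_def by simp
  qed
  also have "\<dots> \<in> borel_measurable lborel"
    using c1 unfolding A_def by measurable
  finally have Gm: "(\<lambda>x. indicator A x *\<^sub>R G x) \<in> borel_measurable lborel" .
  have "set_integrable lborel A G"
    using Gabs Gm unfolding set_integrable_def
    by (simp add: integrable_completion)
  then have LG: "(LINT t:A|lborel. G t) = ((\<Sum>i<k. w^i) * I) / real k"
    using set_borel_integral_eq_integral(2) GI by (metis integral_unique)
  have fcg: "fourier_coeff (\<lambda>z. f (z^k)) n = complex_of_real (1/(2*pi)) * (((\<Sum>i<k. w^i) * I) / real k)"
    unfolding fourier_coeff_def LG[symmetric] A_def G_def by simp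
  show ?thesis
  proof (cases "int k dvd n")
    case True
    then obtain m where m: "n = int k * m" by auto
    have w1: "w = 1" unfolding w_def m using kpos
      using cis_multiple_2pi[of "- of_int m"] by (simp add: field_simps)
    have Hm: "H t = f (cis t) * cis (- (of_int m * t))" for t
      unfolding H_def a_def m using kpos by simp
    have "fourier_coeff f (n div int k) = complex_of_real (1/(2*pi)) * I"
      unfolding fourier_coeff_def HI(2)[symmetric] A_def Hm using k m by simp
    then show ?thesis using True fcg w1 kpos by simp
  next
    case False
    have wk: "w^k = 1" unfolding w_def Complex.DeMoivre using kpos
      using cis_multiple_2pi[of "- of_int n"] by (simp add: field_simps)
    have wne: "w \<noteq> 1"
    proof
      assume "w = 1"
      then obtain j :: int where "-(2*pi* of_int n / real k) = of_int (2*j) * pi"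
        unfolding w_def cis_conv_exp exp_eq_1 by auto
      then have "pi * (of_int n + real k * of_int j) = 0" using kpos pi_gt_zero by (simp add: field_simps)
      then have "of_int n = real k * of_int (-j)" using pi_gt_zero by simp
      then have "n = int k * (-j)" by (metis of_int_eq_iff of_int_mult of_int_of_nat_eq)
      then show False using False by auto
    qed
    have "(\<Sum>i<k. w^i) = 0" using wk wne by (simp add: sum_gp_strict)
    then show ?thesis using False fcg by simp
  qed
qed


theorem proposition7p1:
  fixes f :: "complex \<Rightarrow> complex" and N k :: nat
  assumes "Linf_circle f" and "N > 0" and "k > 0"
  shows "toeplitz_norm f N = toeplitz_norm (\<lambda>z. f (z ^ k)) (k * N)"
  unfolding toeplitz_norm_tn
  by (rule tn_scale[OF assms(3)]) (rule fc_scale[OF assms(1) assms(3)])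

end
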